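(* Let $\lambda\in\mathbb{C}$ be a generic parameter and consider the six equations on the eight vertex values $(u_0,u_1,u_2,u_{12},v_0,v_1,v_2,v_{12})$ of a cube: \[ \mathcal A:\ u_{12}-u_0-\frac{1}{u_2}+\frac{1}{u_1}=0,\qquad \mathcal S:\ u_0-v_{12}-\frac{1}{u_1}+\frac{\lambda}{v_2}=0, \] \[ \mathcal B:\ (u_0-v_0)\Big(\frac1{u_0}+v_2\Big)-1+\lambda=0,\qquad \mathcal B':\ (u_1-v_1)\Big(\frac1{u_1}+v_{12}\Big)-1+\lambda=0, \] \[ \mathcal C:\ \frac1{u_0}-\frac{\lambda}{v_0}-u_1+v_1=0,\qquad \mathcal C':\ \frac1{u_2}-\frac{\lambda}{v_2}-u_{12}+v_{12}=0. \] For generic initial values $u_0,u_1,u_2,v_0\in\mathbb{C}$, solve $\mathcal A=0$ for $u_{12}$, $\mathcal B=0$ for $v_2$ and $\mathcal C=0$ for $v_1$ (each as a rational function of the initial values). Then the three expressions for $v_{12}$ obtained by solving $\mathcal S=0$, $\mathcal B'=0$ and $\mathcal C'=0$ respectively coincide as rational functions of $u_0,u_1,u_2,v_0$ (i.e. the system is consistent around a broken cube). Moreover, with these values the following tetrahedron equations hold identically: \[ \mathcal K_1:\ \Big(v_{12}+\frac1{u_1}\Big)\Big(\frac1{u_0}-\frac{\lambda}{v_0}\Big)-1+\lambda=0,\qquad \mathcal K_2:\ \Big(\frac{\lambda}{v_2}+u_0\Big)(u_1-v_1)-1+\lambda=0. \]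
   Context: Hirota's discrete KdV (dKdV) equation is the partial difference equation $u_{l+1,m+1}-u_{l,m}=\frac{1}{u_{l,m+1}}-\frac{1}{u_{l+1,m}}$ for $u:\mathbb{Z}^2\to\mathbb{C}$. In the cube picture, $u_0=u_{l,m}$, $u_1=u_{l+1,m}$, $u_2=u_{l,m+1}$, $u_{12}=u_{l+1,m+1}$ and $v_0,v_1,v_2,v_{12}$ are the corresponding values of an auxiliary function $v$ on the parallel face; $\mathcal A$ is the dKdV equation. Generic means all denominators appearing are nonzero. *)

theory Defs
  imports Complex_Main
begin

end

theory Submission
  imports Defs
begin

theorem mainTheorem1:
  fixes lam u0 u1 u2 u12 v0 v1 v2 :: complex
  assumes gen: "u0 \<noteq> 0" "u1 \<noteq> 0" "u2 \<noteq> 0" "v0 \<noteq> 0" "u0 \<noteq> v0"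
      "v2 \<noteq> 0" "u1 \<noteq> v1"
    and A: "u12 - u0 - 1 / u2 + 1 / u1 = 0"
    and B: "(u0 - v0) * (1 / u0 + v2) - 1 + lam = 0"
    and C: "1 / u0 - lam / v0 - u1 + v1 = 0"
  shows "\<exists>w. (\<forall>v12. u0 - v12 - 1 / u1 + lam / v2 = 0 \<longleftrightarrow> v12 = w)
           \<and> (\<forall>v12. (u1 - v1) * (1 / u1 + v12) - 1 + lam = 0 \<longleftrightarrow> v12 = w)
           \<and> (\<forall>v12. 1 / u2 - lam / v2 - u12 + v12 = 0 \<longleftrightarrow> v12 = w)
           \<and> (w + 1 / u1) * (1 / u0 - lam / v0) - 1 + lam = 0
           \<and> (lam / v2 + u0) * (u1 - v1) - 1 + lam = 0"
proof -
  have d: "u0 - v0 \<noteq> 0" using gen by simp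
  have V1: "u1 - v1 = 1/u0 - lam/v0" using C by (simp add: algebra_simps)
  have V2: "v2 = (v0 - lam*u0)/(u0*(u0-v0))"
    using B gen d by (simp add: field_simps)
  have nz: "v0 - lam*u0 \<noteq> 0" using gen(6) V2 by auto
  have K: "(lam / v2 + u0) * (u1 - v1) = 1 - lam"
    unfolding V1 V2 using gen d nz by (simp add: field_simps)
  define w where "w = u0 - 1/u1 + lam/v2"
  have "w + 1/u1 = lam/v2 + u0" unfolding w_def by simp
  show ?thesis
  proof (intro exI[of _ w] conjI allI)
    fix v12
    show "u0 - v12 - 1 / u1 + lam / v2 = 0 \<longleftrightarrow> v12 = w" unfolding w_def by (auto simp: algebra_simps)
  next
    fix v12
    have "(u1 - v1) * (1 / u1 + v12) - 1 + lam = (u1 - v1) * (v12 - w)"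
      using K unfolding w_def by (simp add: algebra_simps)
    then show "(u1 - v1) * (1 / u1 + v12) - 1 + lam = 0 \<longleftrightarrow> v12 = w" using gen(7) by simp
  next
    fix v12
    have "u12 = u0 + 1/u2 - 1/u1" using A by (simp add: algebra_simps)
    then have "1 / u2 - lam / v2 - u12 + v12 = v12 - w" unfolding w_def by (simp add: algebra_simps)
    then show "1 / u2 - lam / v2 - u12 + v12 = 0 \<longleftrightarrow> v12 = w" by (metis eq_iff_diff_eq_0)
  next
    show "(w + 1 / u1) * (1 / u0 - lam / v0) - 1 + lam = 0"
      using K V1 \<open>w + 1/u1 = lam/v2 + u0\<close> by simp
  next
    show "(lam / v2 + u0) * (u1 - v1) - 1 + lam = 0" using K by simp
  qed
qed

end
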